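(* For any simple undirected graph $G$ with $m$ edges, $$\Phi_1=\sum_{\{st,uv\}\in Q}(k_sk_t+k_uk_v)=(m+1)\psi-\sum_{st\in E}k_sk_t(k_s+k_t).$$
   Context: $k_x$ is the degree of $x$, $\psi=\sum_{st\in E}k_sk_t$. $Q$ is the set of unordered pairs $\{st,uv\}$ of edges with $s,t,u,v$ pairwise distinct. *)

theory Defs
  imports Main
begin

text \<open>A finite simple undirected graph given by its edge set: each edge is a
2-element set of vertices (no loops, no multi-edges).\<close>
definition simple_graph :: "'a set set \<Rightarrow> bool" where
  "simple_graph E \<longleftrightarrow> finite E \<and> (\<forall>e\<in>E. card e = 2)"

definition deg :: "'a set set \<Rightarrow> 'a \<Rightarrow> int" where
  "deg E x = int (card {e\<in>E. x \<in> e})"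

definition psi :: "'a set set \<Rightarrow> int" where
  "psi E = (\<Sum>e\<in>E. \<Prod>x\<in>e. deg E x)"

definition Qpairs :: "'a set set \<Rightarrow> 'a set set set" where
  "Qpairs E = {{{s,t},{u,v}} | s t u v.
      {s,t} \<in> E \<and> {u,v} \<in> E \<and> distinct [s,t,u,v]}"

definition Phi1 :: "'a set set \<Rightarrow> int" where
  "Phi1 E = (\<Sum>q\<in>Qpairs E. \<Sum>e\<in>q. \<Prod>x\<in>e. deg E x)"

end

theory Submission
  imports Defs
begin

lemma card2_eq: "card e = 2 \<Longrightarrow> \<exists>s t. s \<noteq> t \<and> e = {s,t}"
  by (meson card_2_iff)

lemma Qpairs_alt:
  assumes "simple_graph E"
  shows "Qpairs E = (\<lambda>p. {fst p, snd p}) ` {p\<in>E\<times>E. fst p \<inter> snd p = {}}"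
proof (rule set_eqI, rule iffI)
  fix q assume "q \<in> Qpairs E"
  then obtain s t u v where q: "q = {{s,t},{u,v}}" "{s,t}\<in>E" "{u,v}\<in>E" "distinct [s,t,u,v]"
    unfolding Qpairs_def by blast
  then show "q \<in> (\<lambda>p. {fst p, snd p}) ` {p\<in>E\<times>E. fst p \<inter> snd p = {}}"
    by (intro image_eqI[where x="({s,t},{u,v})"]) auto
next
  fix q assume "q \<in> (\<lambda>p. {fst p, snd p}) ` {p\<in>E\<times>E. fst p \<inter> snd p = {}}"
  then obtain e f where ef: "q = {e,f}" "e\<in>E" "f\<in>E" "e \<inter> f = {}" by auto
  from assms ef obtain s t where "s\<noteq>t" "e={s,t}" unfolding simple_graph_def by (meson card2_eq)
  moreover from assms ef obtain u v where "u\<noteq>v" "f={u,v}" unfolding simple_graph_def by (meson card2_eq)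
  ultimately show "q \<in> Qpairs E" using ef unfolding Qpairs_def by auto
qed

theorem proposition7:
  fixes E :: "'a set set" and m :: nat
  assumes "simple_graph E" and "card E = m"
  shows "Phi1 E = (int m + 1) * psi E
           - (\<Sum>e\<in>E. (\<Prod>x\<in>e. deg E x) * (\<Sum>x\<in>e. deg E x))"
proof -
  define w where "w e = (\<Prod>x\<in>e. deg E x)" for e
  define P where "P = {p\<in>E\<times>E. fst p \<inter> snd p = {}}"
  define D where "D e = {f\<in>E. e \<inter> f = {}}" for e
  have fin: "finite E" using assms(1) unfolding simple_graph_def by auto
  have c2: "\<And>e. e\<in>E \<Longrightarrow> card e = 2" using assms(1) unfolding simple_graph_def by auto
  have finP: "finite P" unfolding P_def using fin by auto
  have "(\<Sum>p\<in>P. w (fst p)) = (\<Sum>q\<in>(\<lambda>p. {fst p, snd p}) ` P. \<Sum>p\<in>{p\<in>P. {fst p, snd p} = q}. w (fst p))"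
    by (rule sum.image_gen[OF finP])
  also have "\<dots> = (\<Sum>q\<in>(\<lambda>p. {fst p, snd p}) ` P. \<Sum>e\<in>q. w e)"
  proof (rule sum.cong[OF refl])
    fix q assume "q \<in> (\<lambda>p. {fst p, snd p}) ` P"
    then obtain e f where ef: "q = {e,f}" "(e,f) \<in> P" by auto
    have ne: "e \<noteq> f" using ef c2[of e] unfolding P_def by auto
    have "{p\<in>P. {fst p, snd p} = q} = {(e,f),(f,e)}"
      using ef unfolding P_def by (auto simp: doubleton_eq_iff)
    then show "(\<Sum>p\<in>{p\<in>P. {fst p, snd p} = q}. w (fst p)) = (\<Sum>e\<in>q. w e)"
      using ne ef by auto
  qed
  also have "\<dots> = Phi1 E"
    unfolding Phi1_def Qpairs_alt[OF assms(1)] P_def w_def ..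
  finally have A: "Phi1 E = (\<Sum>p\<in>P. w (fst p))" ..
  have "(\<Sum>p\<in>P. w (fst p)) = (\<Sum>e\<in>E. \<Sum>f\<in>D e. w e)"
    unfolding P_def D_def using fin
    by (subst sum.Sigma) (auto intro!: sum.cong simp: Sigma_def)
  also have "\<dots> = (\<Sum>e\<in>E. w e * (int m + 1 - (\<Sum>x\<in>e. deg E x)))"
  proof (rule sum.cong[OF refl])
    fix e assume e: "e \<in> E"
    then obtain s t where st: "s\<noteq>t" "e={s,t}" using c2 card2_eq by blast
    have "E - D e = {f\<in>E. s\<in>f} \<union> {f\<in>E. t\<in>f}" unfolding D_def st by auto
    moreover have "{f\<in>E. s\<in>f} \<inter> {f\<in>E. t\<in>f} = {e}"
    proof (rule set_eqI, rule iffI)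
      fix f assume "f \<in> {f\<in>E. s\<in>f} \<inter> {f\<in>E. t\<in>f}"
      then have f: "f\<in>E" "s\<in>f" "t\<in>f" by auto
      have "{s,t} \<subseteq> f" using f by auto
      moreover have "card {s,t} = card f" using c2[OF f(1)] st by auto
      moreover have "finite f" using c2[OF f(1)] card.infinite by fastforce
      ultimately have "{s,t} = f" using card_subset_eq[of f "{s,t}"] by simp
      then show "f \<in> {e}" using st by simp
    qed (use e st in auto)
    ultimately have "card (E - D e) + 1 = card {f\<in>E. s\<in>f} + card {f\<in>E. t\<in>f}"
      using fin card_Un_Int[of "{f\<in>E. s\<in>f}" "{f\<in>E. t\<in>f}"] by auto
    moreover have "card (E - D e) + card (D e) = m"
      using fin assms(2) card_Diff_subset[of "D e" E] card_mono[of E "D e"]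
      unfolding D_def by auto
    ultimately have "int (card (D e)) = int m + 1 - (deg E s + deg E t)"
      unfolding deg_def by linarith
    then show "(\<Sum>f\<in>D e. w e) = w e * (int m + 1 - (\<Sum>x\<in>e. deg E x))"
      using st by simp
  qed
  also have "\<dots> = (int m + 1) * psi E - (\<Sum>e\<in>E. w e * (\<Sum>x\<in>e. deg E x))"
    unfolding psi_def w_def by (simp add: algebra_simps sum_distrib_left sum_subtractf)
  finally show ?thesis using A unfolding w_def by simp
qed

end
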